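(* Let $\mathbf{X},\mathbf{X}_1,\ldots,\mathbf{X}_n$ be i.i.d. samples from a continuous density $f$ which is bounded away from zero and infinity on $[0,1]^p$. If $\mathbf{X}$ lies inside the convex hull of $\mathbf{X}_1,\ldots,\mathbf{X}_n$, let $\mathbf{X}_{(1)}$ be any one of the vertices of the simplex of the Delaunay triangulation of $\{\mathbf{X}_1,\ldots,\mathbf{X}_n\}$ covering $\mathbf{X}$; otherwise let $\mathbf{X}_{(1)}$ be the nearest neighbour of $\mathbf{X}$ among $\mathbf{X}_1,\ldots,\mathbf{X}_n$. Then $\mathbf{X}_{(1)}\to\mathbf{X}$ in probability as $n\to\infty$.
   Context: The Delaunay triangulation of a finite point set in general position in $\mathbb{R}^p$ is the unique triangulation of its convex hull into $p$-simplices with vertices in the set such that no point of the set lies inside the circumscribed sphere of any simplex. *)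

theory Defs
  imports "HOL-Probability.Probability"
begin

definition delaunay_simplex :: "'a::euclidean_space set \<Rightarrow> 'a set \<Rightarrow> bool" where
  "delaunay_simplex P S \<longleftrightarrow>
     S \<subseteq> P \<and> card S = DIM('a) + 1 \<and> \<not> affine_dependent S \<and>
     (\<exists>c r. (\<forall>v\<in>S. dist c v = r) \<and> (\<forall>q\<in>P. r \<le> dist c q))"

definition X1_choice :: "'a::euclidean_space set \<Rightarrow> 'a \<Rightarrow> 'a \<Rightarrow> bool" where
  "X1_choice P x y \<longleftrightarrow>
     (if x \<in> convex hull P
      then (\<exists>S. delaunay_simplex P S \<and> x \<in> convex hull S \<and> y \<in> S)
      else (y \<in> P \<and> (\<forall>q\<in>P. dist x y \<le> dist x q)))"

end

theory Submission
  imports Defs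
begin

definition cellh :: "real \<Rightarrow> ('a::euclidean_space \<Rightarrow> nat) \<Rightarrow> 'a set" where
  "cellh h k = cbox (\<Sum>b\<in>Basis. (real (k b) * h) *\<^sub>R b) (\<Sum>b\<in>Basis. ((real (k b) + 1) * h) *\<^sub>R b)"

lemma mem_cellh:
  "(z::'a::euclidean_space) \<in> cellh h k \<longleftrightarrow> (\<forall>b\<in>Basis. real (k b) * h \<le> z \<bullet> b \<and> z \<bullet> b \<le> (real (k b) + 1) * h)"
  unfolding cellh_def mem_box by (simp add: inner_sum_left inner_Basis if_distrib cong: if_cong)

lemma cell_in_ball:
  fixes c :: "'a::euclidean_space"
  assumes h: "h > 0" and c: "\<forall>b\<in>Basis. 0 \<le> c \<bullet> b"
  defines "k \<equiv> (\<lambda>b. if b \<in> Basis then nat \<lfloor>(c \<bullet> b) / h\<rfloor> else undefined)"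
  shows "cellh h k \<subseteq> ball c (2 * real DIM('a) * h)"
proof
  fix z assume z: "z \<in> cellh h k"
  have comp: "\<bar>(z - c) \<bullet> b\<bar> \<le> h" if b: "b \<in> Basis" for b
  proof -
    have kb: "k b = nat \<lfloor>(c \<bullet> b) / h\<rfloor>" using b by (simp add: k_def)
    have f0: "0 \<le> \<lfloor>(c \<bullet> b) / h\<rfloor>" using c b h by simp
    have r: "real (k b) = of_int \<lfloor>(c \<bullet> b) / h\<rfloor>" using kb f0 by simp
    have l1: "real (k b) * h \<le> c \<bullet> b"
      using r h by (metis of_int_floor_le pos_le_divide_eq)
    have l2: "c \<bullet> b < (real (k b) + 1) * h"
      using r h by (metis floor_correct pos_divide_less_eq of_int_1 of_int_add)
    have "real (k b) * h \<le> z \<bullet> b \<and> z \<bullet> b \<le> (real (k b) + 1) * h" using z b by (simp add: mem_cellh)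
    then show ?thesis using l1 l2 by (simp add: inner_diff_left algebra_simps abs_le_iff)
  qed
  have "norm (z - c) \<le> (\<Sum>b\<in>Basis. \<bar>(z - c) \<bullet> b\<bar>)" by (rule norm_le_l1)
  also have "\<dots> \<le> (\<Sum>b\<in>(Basis::'a set). h)" by (rule sum_mono) (use comp in auto)
  also have "\<dots> = real DIM('a) * h" by simp
  also have "\<dots> < 2 * real DIM('a) * h" using h by simp
  finally show "z \<in> ball c (2 * real DIM('a) * h)" by (simp add: dist_norm norm_minus_commute)
qed

lemma ball_in_cube:
  fixes x :: "'a::euclidean_space"
  assumes "x \<in> cbox (\<tau> *\<^sub>R One) ((1 - \<tau>) *\<^sub>R One)"
  shows "ball x \<tau> \<subseteq> cbox 0 One"
proof
  fix z assume "z \<in> ball x \<tau>"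
  then have d: "norm (z - x) < \<tau>" by (simp add: dist_norm norm_minus_commute)
  show "z \<in> cbox 0 One" unfolding mem_box
  proof (intro ballI conjI)
    fix b :: 'a assume b: "b \<in> Basis"
    have "\<bar>(z - x) \<bullet> b\<bar> \<le> norm (z - x)" using b by (rule Basis_le_norm)
    moreover have "\<tau> \<le> x \<bullet> b" "x \<bullet> b \<le> 1 - \<tau>" using assms b by (auto simp: mem_box)
    ultimately show "0 \<bullet> b \<le> z \<bullet> b" "z \<bullet> b \<le> One \<bullet> b" using d b by (auto simp: inner_diff_left abs_le_iff)
  qed
qed

lemma key_geom:
  fixes x y :: "'a::euclidean_space"
  assumes X1: "X1_choice P x y" and e: "e < dist y x" and tau: "0 < \<tau>" "\<tau> \<le> e / 2"
    and xin: "x \<in> cbox (\<tau> *\<^sub>R One) ((1 - \<tau>) *\<^sub>R One)"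
  shows "\<exists>k \<in> Basis \<rightarrow>\<^sub>E {..nat \<lfloor>1 / (\<tau> / (4 * real DIM('a)))\<rfloor>}.
           cellh (\<tau> / (4 * real DIM('a))) k \<subseteq> cbox 0 One \<and> (\<forall>q\<in>P. q \<notin> cellh (\<tau> / (4 * real DIM('a))) k)"
proof -
  define h where "h = \<tau> / (4 * real DIM('a))"
  have h: "h > 0" using tau by (simp add: h_def)
  obtain c r where r: "\<tau> \<le> r" "dist c x \<le> r" "\<forall>q\<in>P. r \<le> dist c q"
  proof (cases "x \<in> convex hull P")
    case True
    then obtain S where S: "delaunay_simplex P S" "x \<in> convex hull S" "y \<in> S"
      using X1 by (auto simp: X1_choice_def)
    then obtain c r where cr: "\<forall>v\<in>S. dist c v = r" "\<forall>q\<in>P. r \<le> dist c q"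
      unfolding delaunay_simplex_def by blast
    have "S \<subseteq> cball c r" using cr by auto
    then have "convex hull S \<subseteq> cball c r" by (simp add: convex_cball hull_minimal)
    then have xc: "dist c x \<le> r" using S by auto
    have "dist c y = r" using cr S by auto
    then have "dist y x \<le> 2 * r" using xc dist_triangle[of y x c] by (simp add: dist_commute)
    then have "\<tau> \<le> r" using e tau by linarith
    then show ?thesis using that xc cr by blast
  next
    case False
    then have y: "y \<in> P" "\<forall>q\<in>P. dist x y \<le> dist x q" using X1 by (auto simp: X1_choice_def)
    show ?thesis
    proof (rule that[of "dist x y" x])
      show "\<tau> \<le> dist x y" using e tau by (simp add: dist_commute)
    qed (use y in auto)
  qed
  define s where "s = \<tau> / 2"
  have s: "0 < s" "s < \<tau>" "s \<le> r" using tau r by (auto simp: s_def)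
  define c' where "c' = x + (s / r) *\<^sub>R (c - x)"
  have rpos: "r > 0" using r tau by linarith
  have dxc': "dist x c' \<le> s"
  proof -
    have "dist x c' = (s / r) * dist c x" using s rpos by (simp add: c'_def dist_norm dist_commute)
    also have "\<dots> \<le> (s / r) * r" using r s rpos by (intro mult_left_mono) auto
    finally show ?thesis using rpos by simp
  qed
  have dcc': "dist c c' \<le> r - s"
  proof -
    have "c - c' = (1 - s / r) *\<^sub>R (c - x)" by (simp add: c'_def algebra_simps)
    then have "dist c c' = (1 - s / r) * dist c x" using s rpos by (simp add: dist_norm)
    also have "\<dots> \<le> (1 - s / r) * r" using r s rpos by (intro mult_left_mono) auto
    finally show ?thesis using rpos by (simp add: algebra_simps)
  qed
  have b1: "ball c' s \<subseteq> ball c r"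
  proof
    fix z assume "z \<in> ball c' s"
    then have "dist c' z < s" by simp
    then show "z \<in> ball c r" using dcc' dist_triangle[of c z c'] by simp
  qed
  have b2: "ball c' s \<subseteq> ball x \<tau>"
  proof
    fix z assume "z \<in> ball c' s"
    then have "dist c' z < s" by simp
    then show "z \<in> ball x \<tau>" using dxc' dist_triangle[of x z c'] s_def by simp
  qed
  have cube: "ball x \<tau> \<subseteq> cbox 0 One" by (rule ball_in_cube[OF xin])
  have c'in: "c' \<in> cbox 0 One" using dxc' s cube by auto
  then have c'0: "\<forall>b\<in>Basis. 0 \<le> c' \<bullet> b" and c'1: "\<forall>b\<in>Basis. c' \<bullet> b \<le> 1" by (auto simp: mem_box)
  define k where "k = (\<lambda>b. if b \<in> Basis then nat \<lfloor>(c' \<bullet> b) / h\<rfloor> else undefined)"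
  have cb: "cellh h k \<subseteq> ball c' (2 * real DIM('a) * h)"
    unfolding k_def by (rule cell_in_ball[OF h c'0])
  have "2 * real DIM('a) * h = s" by (simp add: h_def s_def)
  with cb have cb': "cellh h k \<subseteq> ball c' s" by simp
  have kin: "k \<in> Basis \<rightarrow>\<^sub>E {..nat \<lfloor>1 / h\<rfloor>}"
  proof
    fix b :: 'a assume b: "b \<in> Basis"
    have "(c' \<bullet> b) / h \<le> 1 / h" using c'1 b h by (simp add: divide_right_mono)
    then have "\<lfloor>(c' \<bullet> b) / h\<rfloor> \<le> \<lfloor>1 / h\<rfloor>" by (rule floor_mono)
    then show "k b \<in> {..nat \<lfloor>1 / h\<rfloor>}" using b by (simp add: k_def nat_mono)
  next
    fix b :: 'a assume "b \<notin> Basis" then show "k b = undefined" by (simp add: k_def)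
  qed
  have "cellh h k \<subseteq> cbox 0 One" using cb' b2 cube by blast
  moreover have "\<forall>q\<in>P. q \<notin> cellh h k"
  proof (intro ballI notI)
    fix q assume q: "q \<in> P" "q \<in> cellh h k"
    then have "q \<in> ball c r" using cb' b1 by blast
    then show False using r(3) q by auto
  qed
  ultimately show ?thesis using kin unfolding h_def by blast
qed

lemma bernoulli_le:
  fixes a :: real assumes "0 \<le> a" "a \<le> 1"
  shows "1 - real n * a \<le> (1 - a) ^ n"
proof (induction n)
  case 0 then show ?case by simp
next
  case (Suc n)
  have "(1 - a) * (1 - real n * a) \<le> (1 - a) * (1 - a) ^ n"
    using Suc assms by (intro mult_left_mono) auto
  moreover have "1 - real (Suc n) * a \<le> (1 - a) * (1 - real n * a)"
    using assms by (simp add: algebra_simps)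
  ultimately show ?case by simp
qed

theorem corollary1:
  fixes M :: "'b measure" and f :: "'a::euclidean_space \<Rightarrow> real"
    and X :: "'b \<Rightarrow> 'a" and Xs :: "nat \<Rightarrow> 'b \<Rightarrow> 'a" and Y :: "nat \<Rightarrow> 'b \<Rightarrow> 'a"
  assumes "prob_space M"
    and "continuous_on (cbox 0 One) f"
    and "\<exists>c C. 0 < c \<and> c \<le> C \<and> (\<forall>x\<in>cbox 0 One. c \<le> f x \<and> f x \<le> C)"
    and "\<forall>x. x \<notin> cbox 0 One \<longrightarrow> f x = 0"
    and "distributed M lborel X (\<lambda>x. ennreal (f x))"
    and "\<forall>i. distributed M lborel (Xs i) (\<lambda>x. ennreal (f x))"
    and "prob_space.indep_vars M (\<lambda>_. borel)
           (\<lambda>i. case i of None \<Rightarrow> X | Some j \<Rightarrow> Xs j) (UNIV :: nat option set)"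
    and "\<forall>n. Y n \<in> borel_measurable M"
    and "\<forall>n\<ge>1. AE \<omega> in M. X1_choice {Xs i \<omega> | i. i < n} (X \<omega>) (Y n \<omega>)"
  shows "\<forall>e>0. (\<lambda>n. measure M {\<omega>\<in>space M. e < dist (Y n \<omega>) (X \<omega>)}) \<longlonglongrightarrow> 0"
proof (intro allI impI)
  fix e :: real assume e: "e > 0"
  interpret prob_space M by (rule assms(1))
  obtain c0 C0 where cC: "0 < c0" "c0 \<le> C0" "\<forall>x\<in>cbox 0 One. c0 \<le> f x \<and> f x \<le> C0"
    using assms(3) by blast
  define p where "p = real DIM('a)"
  have p: "p \<ge> 1" by (simp add: p_def DIM_positive Suc_le_eq)
  have Xm: "X \<in> measurable M lborel" using distributed_measurable[OF assms(5)] .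
  have Xsm: "Xs i \<in> measurable M lborel" for i using distributed_measurable assms(6) by blast
  have em: "emeasure M (X -` A \<inter> space M) = (\<integral>\<^sup>+x. ennreal (f x) * indicator A x \<partial>lborel)"
    if "A \<in> sets borel" for A using distributed_emeasure[OF assms(5)] that by simp
  have ems: "emeasure M (Xs i -` A \<inter> space M) = (\<integral>\<^sup>+x. ennreal (f x) * indicator A x \<partial>lborel)"
    if "A \<in> sets borel" for A i using distributed_emeasure[OF assms(6)[rule_format]] that by simp
  show "(\<lambda>n. measure M {\<omega>\<in>space M. e < dist (Y n \<omega>) (X \<omega>)}) \<longlonglongrightarrow> 0"
  proof (rule LIMSEQ_I)
    fix \<epsilon> :: real assume \<epsilon>: "0 < \<epsilon>"
    define \<tau> where "\<tau> = min (e / 2) (min (1 / 2) (\<epsilon> / (8 * p * C0)))"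
    have \<tau>: "0 < \<tau>" "\<tau> \<le> e / 2" "\<tau> \<le> 1 / 2" "\<tau> \<le> \<epsilon> / (8 * p * C0)"
      using e \<epsilon> p cC by (auto simp: \<tau>_def)
    have \<tau>C: "C0 * (2 * p * \<tau>) \<le> \<epsilon> / 4"
    proof -
      have "8 * p * C0 * \<tau> \<le> \<epsilon>" using \<tau>(4) p cC by (simp add: field_simps)
      then show ?thesis by (simp add: algebra_simps)
    qed
    define inner :: "'a set" where "inner = cbox (\<tau> *\<^sub>R One) ((1 - \<tau>) *\<^sub>R One)"
    define Bset where "Bset = X -` (UNIV - inner) \<inter> space M"
    have inner_sets: "UNIV - inner \<in> sets borel" by (simp add: inner_def)
    have Bsets: "Bset \<in> sets M" unfolding Bset_def
      using measurable_sets[OF Xm, of "UNIV - inner"] inner_sets by simp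
    have probB: "prob Bset \<le> \<epsilon> / 4"
    proof -
      have inner_sub: "inner \<subseteq> cbox 0 One"
      proof
        fix x assume "x \<in> inner"
        then have xb: "\<forall>i\<in>Basis. \<tau> \<le> x \<bullet> i \<and> x \<bullet> i \<le> 1 - \<tau>" by (simp add: inner_def mem_box)
        show "x \<in> cbox 0 One" unfolding mem_box
        proof
          fix i :: 'a assume "i \<in> Basis"
          then show "0 \<bullet> i \<le> x \<bullet> i \<and> x \<bullet> i \<le> One \<bullet> i" using xb \<tau> by fastforce
        qed
      qed
      have pw: "0 \<le> 1 - (1 - 2 * \<tau>) ^ DIM('a)"
      proof -
        have "(1 - 2 * \<tau>) ^ DIM('a) \<le> 1" using \<tau> by (intro power_le_one) auto
        then show ?thesis by simp
      qed
      have "emeasure M Bset = (\<integral>\<^sup>+x. ennreal (f x) * indicator (UNIV - inner) x \<partial>lborel)"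
        unfolding Bset_def by (rule em[OF inner_sets])
      also have "\<dots> \<le> (\<integral>\<^sup>+x. ennreal C0 * indicator (cbox 0 One - inner) x \<partial>lborel)"
      proof (rule nn_integral_mono)
        fix x :: 'a
        show "ennreal (f x) * indicator (UNIV - inner) x \<le> ennreal C0 * indicator (cbox 0 One - inner) x"
          using cC assms(4) by (cases "x \<in> cbox 0 One"; cases "x \<in> inner") auto
      qed
      also have "\<dots> = ennreal C0 * emeasure lborel (cbox 0 One - inner)"
        by (rule nn_integral_cmult_indicator) (simp add: inner_def)
      also have "emeasure lborel (cbox 0 One - inner) = emeasure lborel (cbox 0 (One::'a)) - emeasure lborel inner"
        using inner_sub by (intro emeasure_Diff) (use emeasure_lborel_cbox_finite[of "\<tau> *\<^sub>R One" "(1 - \<tau>) *\<^sub>R (One::'a)"] in \<open>auto simp: inner_def\<close>)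
      also have "emeasure lborel (cbox 0 (One::'a)) = 1"
        by (simp add: emeasure_lborel_cbox_eq)
      also have "emeasure lborel inner = ennreal ((1 - 2 * \<tau>) ^ DIM('a))"
        using \<tau> by (simp add: emeasure_lborel_cbox_eq inner_def algebra_simps)
      also have "(1::ennreal) - ennreal ((1 - 2 * \<tau>) ^ DIM('a)) = ennreal (1 - (1 - 2 * \<tau>) ^ DIM('a))"
        using \<tau> by (simp add: ennreal_minus[symmetric])
      also have "ennreal C0 * ennreal (1 - (1 - 2 * \<tau>) ^ DIM('a)) = ennreal (C0 * (1 - (1 - 2 * \<tau>) ^ DIM('a)))"
      proof -
        have "(1 - 2 * \<tau>) ^ DIM('a) \<le> 1" using \<tau> by (intro power_le_one) auto
        then show ?thesis using cC by (simp add: ennreal_mult)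
      qed
      finally have "ennreal (prob Bset) \<le> ennreal (C0 * (1 - (1 - 2 * \<tau>) ^ DIM('a)))"
        by (simp add: emeasure_eq_measure)
      then have "prob Bset \<le> C0 * (1 - (1 - 2 * \<tau>) ^ DIM('a))"
        using ennreal_le_iff[OF mult_nonneg_nonneg[OF _ pw]] cC by simp
      also have "\<dots> \<le> C0 * (2 * p * \<tau>)"
        using bernoulli_le[of "2 * \<tau>" "DIM('a)"] \<tau> cC unfolding p_def
        by (intro mult_left_mono) auto
      finally show ?thesis using \<tau>C by simp
    qed
    define h where "h = \<tau> / (4 * real DIM('a))"
    have h: "0 < h" using \<tau> by (simp add: h_def)
    define K where "K = {k \<in> (Basis::'a set) \<rightarrow>\<^sub>E {..nat \<lfloor>1 / h\<rfloor>}. cellh h k \<subseteq> cbox 0 One}"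
    have finK: "finite K" 
    proof (rule finite_subset)
      show "K \<subseteq> Basis \<rightarrow>\<^sub>E {..nat \<lfloor>1 / h\<rfloor>}" unfolding K_def by blast
      show "finite (Basis \<rightarrow>\<^sub>E {..nat \<lfloor>1 / h\<rfloor>})" by (rule finite_PiE) auto
    qed
    have cell_sets: "cellh h k \<in> sets borel" for k by (simp add: cellh_def)
    have cellc_sets: "UNIV - cellh h k \<in> sets borel" for k by (simp add: cellh_def)
    have cellL: "cellh h k \<in> sets lborel" for k using cell_sets by simp
    have cellcL: "UNIV - cellh h k \<in> sets lborel" for k using cellc_sets by simp
    define I where "I k = (\<integral>\<^sup>+x. ennreal (f x) * indicator (cellh h k) x \<partial>lborel)" for k
    define m where "m k = enn2real (I k)" for k
    have mprob: "prob (Xs i -` cellh h k \<inter> space M) = m k" for i k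
      unfolding measure_def m_def I_def using ems[OF cell_sets] by simp
    have mle: "m k \<le> 1" for k using mprob[of 0 k] prob_le_1 by metis
    have mpos: "0 < m k" if k: "k \<in> K" for k
    proof -
      have sub: "cellh h k \<subseteq> cbox 0 One" using k by (simp add: K_def)
      have vol: "emeasure lborel (cellh h k) = ennreal (h ^ DIM('a))"
        using h by (simp add: cellh_def emeasure_lborel_cbox_eq inner_sum_left inner_Basis
            if_distrib algebra_simps cong: if_cong)
      have "ennreal c0 * emeasure lborel (cellh h k) = (\<integral>\<^sup>+x. ennreal c0 * indicator (cellh h k) x \<partial>lborel)"
        by (rule nn_integral_cmult_indicator[symmetric]) (simp add: cellh_def)
      also have "\<dots> \<le> I k" unfolding I_def
      proof (rule nn_integral_mono)
        fix x :: 'a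
        show "ennreal c0 * indicator (cellh h k) x \<le> ennreal (f x) * indicator (cellh h k) x"
          using cC sub by (cases "x \<in> cellh h k") (auto intro!: ennreal_leI)
      qed
      finally have lb: "ennreal (c0 * h ^ DIM('a)) \<le> I k"
        using vol cC h by (simp add: ennreal_mult)
      have pos: "0 < c0 * h ^ DIM('a)" using cC h by simp
      have fin: "I k < \<infinity>"
      proof -
        have "I k = emeasure M (Xs 0 -` cellh h k \<inter> space M)" unfolding I_def using ems[OF cell_sets] by simp
        then show ?thesis by (simp add: top.not_eq_extremum[symmetric] emeasure_finite)
      qed
      have "0 < I k" using lb pos by (metis ennreal_eq_0_iff leD not_gr_zero order.strict_trans1 ennreal_less_zero_iff)
      then show ?thesis using fin unfolding m_def by (simp add: enn2real_positive_iff)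
    qed
    define E where "E n k = (\<Inter>i\<in>{..<n}. Xs i -` (UNIV - cellh h k) \<inter> space M)" for n k
    have Esets: "E n k \<in> sets M" if "n \<ge> 1" for n k
      unfolding E_def using that measurable_sets[OF Xsm cellcL]
      by (intro sets.finite_INT) (auto simp: lessThan_empty_iff)
    have Eprob: "prob (E n k) = (1 - m k) ^ n" if n: "n \<ge> 1" for n k
    proof -
      let ?Z = "\<lambda>i. case i of None \<Rightarrow> X | Some j \<Rightarrow> Xs j"
      have "prob (\<Inter>i\<in>Some ` {..<n}. ?Z i -` (UNIV - cellh h k) \<inter> space M)
          = (\<Prod>i\<in>Some ` {..<n}. prob (?Z i -` (UNIV - cellh h k) \<inter> space M))"
        using n by (intro indep_varsD[OF assms(7)]) (auto simp: cellc_sets lessThan_empty_iff)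
      moreover have "(\<Inter>i\<in>Some ` {..<n}. ?Z i -` (UNIV - cellh h k) \<inter> space M) = E n k"
        by (auto simp: E_def)
      moreover have "(\<Prod>i\<in>Some ` {..<n}. prob (?Z i -` (UNIV - cellh h k) \<inter> space M))
          = (\<Prod>i\<in>{..<n}. prob (Xs i -` (UNIV - cellh h k) \<inter> space M))"
        by (simp add: prod.reindex)
      moreover have "prob (Xs i -` (UNIV - cellh h k) \<inter> space M) = 1 - m k" for i
      proof -
        have "Xs i -` (UNIV - cellh h k) \<inter> space M = space M - (Xs i -` cellh h k \<inter> space M)" by auto
        then show ?thesis using prob_compl[OF measurable_sets[OF Xsm cellL]] mprob
          by simp
      qed
      ultimately show ?thesis by simp
    qed
    have lim: "(\<lambda>n. \<Sum>k\<in>K. (1 - m k) ^ n) \<longlonglongrightarrow> 0"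
    proof (rule tendsto_null_sum)
      fix k assume "k \<in> K"
      then show "(\<lambda>n. (1 - m k) ^ n) \<longlonglongrightarrow> 0"
        using mpos mle by (intro LIMSEQ_realpow_zero) auto
    qed
    then obtain N where N: "\<forall>n\<ge>N. (\<Sum>k\<in>K. (1 - m k) ^ n) < \<epsilon> / 2"
    proof -
      have "eventually (\<lambda>n. (\<Sum>k\<in>K. (1 - m k) ^ n) < \<epsilon> / 2) sequentially"
        using order_tendstoD(2)[OF lim, of "\<epsilon> / 2"] \<epsilon> by simp
      then show ?thesis using that unfolding eventually_sequentially by blast
    qed
    show "\<exists>no. \<forall>n\<ge>no. norm (measure M {\<omega>\<in>space M. e < dist (Y n \<omega>) (X \<omega>)} - 0) < \<epsilon>"
    proof (intro exI allI impI)
      fix n assume n: "max N 1 \<le> n"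
      then have n1: "n \<ge> 1" and nN: "n \<ge> N" by auto
      have Usets: "(\<Union>k\<in>K. E n k) \<in> sets M" using Esets[OF n1] finK by auto
      have "AE \<omega> in M. \<omega> \<in> {\<omega>\<in>space M. e < dist (Y n \<omega>) (X \<omega>)} \<longrightarrow> \<omega> \<in> Bset \<union> (\<Union>k\<in>K. E n k)"
        using assms(9)[rule_format, OF n1]
      proof eventually_elim
        case (elim \<omega>)
        show ?case
        proof
          assume om: "\<omega> \<in> {\<omega>\<in>space M. e < dist (Y n \<omega>) (X \<omega>)}"
          show "\<omega> \<in> Bset \<union> (\<Union>k\<in>K. E n k)"
          proof (cases "X \<omega> \<in> inner")
            case False then show ?thesis using om by (simp add: Bset_def)
          next
            case True
            from key_geom[OF elim _ \<tau>(1,2) True[unfolded inner_def]] om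
            obtain k where k: "k \<in> Basis \<rightarrow>\<^sub>E {..nat \<lfloor>1 / h\<rfloor>}" "cellh h k \<subseteq> cbox 0 One"
              "\<forall>q\<in>{Xs i \<omega> |i. i < n}. q \<notin> cellh h k"
              unfolding h_def by auto
            have "k \<in> K" using k by (simp add: K_def)
            moreover have "\<omega> \<in> E n k" using k(3) om by (auto simp: E_def)
            ultimately show ?thesis by blast
          qed
        qed
      qed
      then have s1: "measure M {\<omega>\<in>space M. e < dist (Y n \<omega>) (X \<omega>)} \<le> prob (Bset \<union> (\<Union>k\<in>K. E n k))"
        using Bsets Usets by (intro finite_measure_mono_AE) auto
      have s2: "prob (Bset \<union> (\<Union>k\<in>K. E n k)) \<le> prob Bset + prob (\<Union>k\<in>K. E n k)"
        using Bsets Usets by (rule measure_Un_le)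
      have s3: "prob (\<Union>k\<in>K. E n k) \<le> (\<Sum>k\<in>K. prob (E n k))"
        using finK Esets[OF n1] by (intro finite_measure_subadditive_finite) auto
      have s4: "(\<Sum>k\<in>K. prob (E n k)) = (\<Sum>k\<in>K. (1 - m k) ^ n)"
        using Eprob[OF n1] by simp
      have "measure M {\<omega>\<in>space M. e < dist (Y n \<omega>) (X \<omega>)} < \<epsilon>"
        using s1 s2 s3 s4 probB N nN \<epsilon> by fastforce
      then show "norm (measure M {\<omega>\<in>space M. e < dist (Y n \<omega>) (X \<omega>)} - 0) < \<epsilon>" by simp
    qed
  qed
qed

end
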